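(* Let $\alpha>0$, $\beta,\eta,\kappa\in\mathbb{R}$, $\rho>0$, $p\geq 1$, and $0\le a<x$. Let $f,g$ be two positive functions on $[0,\infty)$ with $f,g\in X^{p}_{c}(a,x)$ (for some $c\in\mathbb{R}$), such that ${}^{\rho}\mathcal{I}^{\alpha,\beta}_{a+,\eta,\kappa}f^{p}(x)<\infty$ and ${}^{\rho}\mathcal{I}^{\alpha,\beta}_{a+,\eta,\kappa}g^{p}(x)<\infty$. If there are real numbers $m,M>0$ with $0<m\leq \frac{f(t)}{g(t)}\leq M$ for all $t\in[a,x]$, then $$\left({}^{\rho}\mathcal{I}^{\alpha,\beta}_{a+,\eta,\kappa}f^{p}(x)\right)^{2/p}+\left({}^{\rho}\mathcal{I}^{\alpha,\beta}_{a+,\eta,\kappa}g^{p}(x)\right)^{2/p}\geq c_{2}\left({}^{\rho}\mathcal{I}^{\alpha,\beta}_{a+,\eta,\kappa}f^{p}(x)\right)^{1/p}\left({}^{\rho}\mathcal{I}^{\alpha,\beta}_{a+,\eta,\kappa}g^{p}(x)\right)^{1/p},$$ where $c_{2}=\frac{(M+1)(m+1)}{M}-2$.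
   Context: For $c\in\mathbb{R}$ and $1\le p<\infty$, $X^{p}_{c}(a,b)$ denotes the space of Lebesgue measurable functions $f$ on $(a,b)$ with $\left(\int_a^b |t^{c}f(t)|^{p}\,\frac{dt}{t}\right)^{1/p}<\infty$. For $\alpha>0$, $\beta,\eta,\kappa\in\mathbb{R}$, $\rho>0$, $0\le a<x$, and a function $\varphi$, the generalized (Katugampola) fractional integral is $${}^{\rho}\mathcal{I}^{\alpha,\beta}_{a+,\eta,\kappa}\varphi(x)=\frac{\rho^{1-\beta}x^{\kappa}}{\Gamma(\alpha)}\int_{a}^{x}\frac{\tau^{\rho(\eta+1)-1}}{(x^{\rho}-\tau^{\rho})^{1-\alpha}}\varphi(\tau)\,d\tau,$$ whenever the integral exists. Notation such as ${}^{\rho}\mathcal{I}^{\alpha,\beta}_{a+,\eta,\kappa}f^{p}(x)$ means the operator applied to the function $\tau\mapsto f(\tau)^p$, evaluated at $x$. *)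

theory Defs
  imports "HOL-Analysis.Analysis"
begin

definition Xpc :: "real \<Rightarrow> real \<Rightarrow> real \<Rightarrow> real \<Rightarrow> (real \<Rightarrow> real) \<Rightarrow> bool" where
  "Xpc c p a b f \<longleftrightarrow>
     set_borel_measurable lebesgue {a<..<b} f \<and>
     set_integrable lebesgue {a<..<b} (\<lambda>t. \<bar>t powr c * f t\<bar> powr p / t)"

definition kat_kernel :: "real \<Rightarrow> real \<Rightarrow> real \<Rightarrow> real \<Rightarrow> real \<Rightarrow> real" where
  "kat_kernel \<rho> \<alpha> \<eta> x \<tau> = \<tau> powr (\<rho> * (\<eta> + 1) - 1) / (x powr \<rho> - \<tau> powr \<rho>) powr (1 - \<alpha>)"

definition kat_int :: "real \<Rightarrow> real \<Rightarrow> real \<Rightarrow> real \<Rightarrow> real \<Rightarrow> real \<Rightarrow> (real \<Rightarrow> real) \<Rightarrow> real \<Rightarrow> real" where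
  "kat_int \<rho> \<alpha> \<beta> \<eta> \<kappa> a \<phi> x =
     \<rho> powr (1 - \<beta>) * x powr \<kappa> / Gamma \<alpha> *
     (LINT \<tau>:{a<..<x}|lebesgue. kat_kernel \<rho> \<alpha> \<eta> x \<tau> * \<phi> \<tau>)"

text \<open>The integral exists and is finite: the integrand is Lebesgue integrable on (a,x).\<close>
definition kat_finite :: "real \<Rightarrow> real \<Rightarrow> real \<Rightarrow> real \<Rightarrow> (real \<Rightarrow> real) \<Rightarrow> real \<Rightarrow> bool" where
  "kat_finite \<rho> \<alpha> \<eta> a \<phi> x \<longleftrightarrow>
     set_integrable lebesgue {a<..<x} (\<lambda>\<tau>. kat_kernel \<rho> \<alpha> \<eta> x \<tau> * \<phi> \<tau>)"

end

theory Submission imports Defs begin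
lemma aux: fixes r m :: real assumes "m > 0" "(r - m) * (r * m - 1) \<ge> 0"
  shows "r * (m + 1/m) \<le> r^2 + 1"
proof -
  have e: "m*(r^2+1) - r*(m^2+1) = (r-m)*(r*m-1)" by (simp add: algebra_simps power2_eq_square)
  have "r*(m^2+1) \<le> m*(r^2+1)" using e assms by linarith
  moreover have "r * (m + 1/m) = r*(m^2+1)/m" using assms by (simp add: field_simps power2_eq_square)
  ultimately show ?thesis using assms by (simp add: pos_divide_le_eq mult.commute)
qed
lemma keyr: fixes r m M :: real
  assumes "m > 0" "M > 0" "m \<le> r" "r \<le> M"
  shows "((M + 1) * (m + 1) / M - 2) * r \<le> r ^ 2 + 1"
proof -
  have c: "(M + 1) * (m + 1) / M - 2 = m - 1 + (m + 1) / M" using assms by (simp add: field_simps)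
  have c1: "m - 1 + (m + 1) / M \<le> m + 1 / m"
  proof -
    have "(m+1)/M \<le> (m+1)/m" using assms by (intro divide_left_mono) auto
    thus ?thesis using assms by (simp add: field_simps)
  qed
  have c2: "m - 1 + (m + 1) / M \<le> M + 1 / M"
  proof -
    have "m - 1 + (m + 1) / M = m - 1 + m / M + 1/M" by (simp add: add_divide_distrib)
    moreover have "m / M \<le> 1" using assms by simp
    ultimately show ?thesis using assms by linarith
  qed
  have r0: "r > 0" using assms by linarith
  show ?thesis
  proof (cases "1 \<le> m")
    case True
    have "r * m \<ge> m * m" using assms by (simp add: mult_right_mono)
    moreover have "m * m \<ge> 1" using mult_mono[OF True True] assms(1) by simp
    ultimately have "r * m \<ge> 1" by linarith
    hence "(r - m) * (r * m - 1) \<ge> 0" using assms by simp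
    hence "r * (m + 1/m) \<le> r^2 + 1" using assms aux by blast
    moreover have "(m - 1 + (m + 1) / M) * r \<le> (m + 1/m) * r" using c1 r0 by simp
    ultimately show ?thesis unfolding c by (metis mult.commute order_trans)
  next
    case F1: False
    show ?thesis
    proof (cases "M \<le> 1")
      case True
      have "r * M \<le> M * M" using assms by (simp add: mult_right_mono)
      moreover have "M * M \<le> 1" using True assms by (simp add: mult_le_one)
      ultimately have "r * M \<le> 1" by linarith
      hence "(r - M) * (r * M - 1) \<ge> 0" using assms by (simp add: mult_nonpos_nonpos)
      hence "r * (M + 1/M) \<le> r^2 + 1" using assms aux by blast
      moreover have "(m - 1 + (m + 1) / M) * r \<le> (M + 1/M) * r" using c2 r0 by simp
      ultimately show ?thesis unfolding c by (metis mult.commute order_trans)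
    next
      case False
      have "m + 1 \<le> 2 * M" using False F1 by linarith
      hence "(m + 1) / M \<le> 2" using assms by (simp add: pos_divide_le_eq)
      hence "m - 1 + (m + 1) / M \<le> 2" using F1 by linarith
      moreover have "2 * r \<le> r^2 + 1" using sum_squares_ge_zero[of "r - 1" 0]
        by (simp add: power2_eq_square algebra_simps)
      ultimately show ?thesis using c r0 by (metis mult_right_mono less_eq_real_def order_trans)
    qed
  qed
qed

theorem theorem9:
  fixes \<alpha> \<beta> \<eta> \<kappa> \<rho> p a x c m M :: real
    and f g :: "real \<Rightarrow> real"
  assumes "\<alpha> > 0" and "\<rho> > 0" and "p \<ge> 1" and "0 \<le> a" and "a < x"
    and "\<And>t. t \<ge> 0 \<Longrightarrow> f t > 0" and "\<And>t. t \<ge> 0 \<Longrightarrow> g t > 0"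
    and "Xpc c p a x f" and "Xpc c p a x g"
    and "kat_finite \<rho> \<alpha> \<eta> a (\<lambda>t. f t powr p) x"
    and "kat_finite \<rho> \<alpha> \<eta> a (\<lambda>t. g t powr p) x"
    and "m > 0" and "M > 0"
    and "\<And>t. t \<in> {a..x} \<Longrightarrow> m \<le> f t / g t \<and> f t / g t \<le> M"
  shows "(kat_int \<rho> \<alpha> \<beta> \<eta> \<kappa> a (\<lambda>t. f t powr p) x) powr (2 / p)
         + (kat_int \<rho> \<alpha> \<beta> \<eta> \<kappa> a (\<lambda>t. g t powr p) x) powr (2 / p)
         \<ge> ((M + 1) * (m + 1) / M - 2)
           * (kat_int \<rho> \<alpha> \<beta> \<eta> \<kappa> a (\<lambda>t. f t powr p) x) powr (1 / p)
           * (kat_int \<rho> \<alpha> \<beta> \<eta> \<kappa> a (\<lambda>t. g t powr p) x) powr (1 / p)"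
proof -
  define K where "K = kat_kernel \<rho> \<alpha> \<eta> x"
  define C where "C = \<rho> powr (1 - \<beta>) * x powr \<kappa> / Gamma \<alpha>"
  define IF where "IF = (LINT \<tau>:{a<..<x}|lebesgue. K \<tau> * f \<tau> powr p)"
  define IG where "IG = (LINT \<tau>:{a<..<x}|lebesgue. K \<tau> * g \<tau> powr p)"
  define F where "F = kat_int \<rho> \<alpha> \<beta> \<eta> \<kappa> a (\<lambda>t. f t powr p) x"
  define G where "G = kat_int \<rho> \<alpha> \<beta> \<eta> \<kappa> a (\<lambda>t. g t powr p) x"
  have x0: "x > 0" using assms by linarith
  have C0: "C > 0" unfolding C_def using assms x0 by (simp add: Gamma_real_pos)
  have FC: "F = C * IF" unfolding F_def C_def IF_def K_def kat_int_def by simp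
  have GC: "G = C * IG" unfolding G_def C_def IG_def K_def kat_int_def by simp
  have intF: "set_integrable lebesgue {a<..<x} (\<lambda>\<tau>. K \<tau> * f \<tau> powr p)"
    using assms(10) unfolding kat_finite_def K_def by simp
  have intG: "set_integrable lebesgue {a<..<x} (\<lambda>\<tau>. K \<tau> * g \<tau> powr p)"
    using assms(11) unfolding kat_finite_def K_def by simp
  have K0: "K \<tau> \<ge> 0" for \<tau> unfolding K_def kat_kernel_def by simp
  have p0: "p > 0" using assms by linarith
  have pt: "m powr p * (K \<tau> * g \<tau> powr p) \<le> K \<tau> * f \<tau> powr p
         \<and> K \<tau> * f \<tau> powr p \<le> M powr p * (K \<tau> * g \<tau> powr p)" if t: "\<tau> \<in> {a<..<x}" for \<tau>
  proof -
    have tt: "\<tau> \<in> {a..x}" "\<tau> \<ge> 0" using t assms by auto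
    have gp: "g \<tau> > 0" "f \<tau> > 0" using tt assms by auto
    have "m * g \<tau> \<le> f \<tau>" "f \<tau> \<le> M * g \<tau>" using assms(14)[OF tt(1)] gp
      by (auto simp: pos_le_divide_eq pos_divide_le_eq)
    hence "(m * g \<tau>) powr p \<le> f \<tau> powr p" "f \<tau> powr p \<le> (M * g \<tau>) powr p"
      using gp p0 assms(12,13) by (auto intro!: powr_mono2)
    hence "m powr p * g \<tau> powr p \<le> f \<tau> powr p" "f \<tau> powr p \<le> M powr p * g \<tau> powr p"
      using gp assms(12,13) by (auto simp: powr_mult)
    thus ?thesis using K0[of \<tau>] by (auto simp: mult_left_mono algebra_simps)
  qed
  have i1: "set_integrable lebesgue {a<..<x} (\<lambda>\<tau>. m powr p * (K \<tau> * g \<tau> powr p))"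
    using intG by (rule set_integrable_mult_right)
  have i2: "set_integrable lebesgue {a<..<x} (\<lambda>\<tau>. M powr p * (K \<tau> * g \<tau> powr p))"
    using intG by (rule set_integrable_mult_right)
  have "m powr p * IG \<le> IF"
  proof -
    have "(LINT \<tau>:{a<..<x}|lebesgue. m powr p * (K \<tau> * g \<tau> powr p)) \<le> IF"
      unfolding IF_def by (rule set_integral_mono[OF i1 intF]) (use pt in blast)
    thus ?thesis unfolding IG_def by (simp add: set_integral_mult_right)
  qed
  have "IF \<le> M powr p * IG"
  proof -
    have "IF \<le> (LINT \<tau>:{a<..<x}|lebesgue. M powr p * (K \<tau> * g \<tau> powr p))"
      unfolding IF_def by (rule set_integral_mono[OF intF i2]) (use pt in blast)
    thus ?thesis unfolding IG_def by (simp add: set_integral_mult_right)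
  qed
  have IG0: "IG \<ge> 0"
  proof -
    have "(LINT \<tau>:{a<..<x}|lebesgue. (0::real)) \<le> IG"
      unfolding IG_def by (rule set_integral_mono[OF _ intG]) (auto simp: K0)
    thus ?thesis by simp
  qed
  have FG1: "m powr p * G \<le> F" unfolding FC GC using \<open>m powr p * IG \<le> IF\<close> C0
    by (metis mult.left_commute mult_left_mono less_eq_real_def)
  have FG2: "F \<le> M powr p * G" unfolding FC GC using \<open>IF \<le> M powr p * IG\<close> C0
    by (metis mult.left_commute mult_left_mono less_eq_real_def)
  have G0: "G \<ge> 0" unfolding GC using C0 IG0 by simp
  define u where "u = F powr (1/p)"
  define v where "v = G powr (1/p)"
  have u0: "u \<ge> 0" "v \<ge> 0" unfolding u_def v_def by auto
  have "(m powr p * G) powr (1/p) = m * v" unfolding v_def using assms(12) G0 p0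
    by (simp add: powr_mult powr_powr)
  moreover have "(M powr p * G) powr (1/p) = M * v" unfolding v_def using assms(13) G0 p0
    by (simp add: powr_mult powr_powr)
  moreover have "(m powr p * G) powr (1/p) \<le> u" unfolding u_def using FG1 G0 p0
    by (intro powr_mono2) auto
  moreover have "u \<le> (M powr p * G) powr (1/p)" unfolding u_def using FG2 G0 p0 FG1
    by (intro powr_mono2) (auto intro: order_trans[OF _ FG1] simp: G0)
  ultimately have mv: "m * v \<le> u" "u \<le> M * v" by auto
  have sq: "F powr (2/p) = u^2" "G powr (2/p) = v^2" unfolding u_def v_def
    by (simp_all add: power2_eq_square flip: powr_add)
  have "((M + 1) * (m + 1) / M - 2) * u * v \<le> u^2 + v^2"
  proof (cases "v = 0")
    case True
    hence "u = 0" using mv u0 by simp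
    then show ?thesis by simp
  next
    case False
    hence vp: "v > 0" using u0 by simp
    define r where "r = u / v"
    have ur: "u = r * v" unfolding r_def using vp by simp
    have "m \<le> r" "r \<le> M" using mv vp unfolding r_def by (auto simp: pos_le_divide_eq pos_divide_le_eq)
    hence "((M + 1) * (m + 1) / M - 2) * r \<le> r ^ 2 + 1" using keyr assms(12,13) by blast
    hence "((M + 1) * (m + 1) / M - 2) * r * v^2 \<le> (r ^ 2 + 1) * v^2"
      by (rule mult_right_mono) simp
    thus ?thesis unfolding ur by (simp add: power2_eq_square algebra_simps)
  qed
  thus ?thesis unfolding sq[unfolded F_def G_def] u_def v_def F_def G_def .
qed

end
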